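(* Let $n\ge 3$ be odd and let $C$ be a Greene–Kleitman chain in $Q_{n-2}$ with $|C|=1$. Put $L:=\ell( *C* )$ and $F:=f( *C* )$ (chains in $Q_n$). Then the bottom end of $L$ is adjacent in $Q_n$ to the top end of $F$, and the chains $*L*$ and $f( *F* )$ are connected at their bottom ends in $Q_{n+2}$. Specifically, if $C=u*v$ with $u,v\in D$, then $L=*\,u\,0\,v\,1$, $*L*=*\,*\,u\,0\,v\,1\,*$, $F=0\,u\,1\,v\,*$, and $f( *F* )=0\,0\,u\,1\,v\,1\,*$; i.e., $L$ and $F$ differ in exactly three positions, and $*L*$ and $f( *F* )$ differ in exactly three positions.
   Context: $Q_n$ is the hypercube on $\{0,1\}^n$. Let $D$ be the set of bitstrings (including the empty string) with equally many $0$s and $1$s such that every prefix has at least as many $0$s as $1$s. A Greene–Kleitman chain in $Q_n$ is a string of length $n$ over $\{0,1,*\}$ of the form $u_0*u_1*\cdots*u_{h-1}*u_h$ with all $u_j\in D$, representing the path whose vertices are obtained by replacing the $*$s by $i$ ones followed by $h-i$ zeros; $|C|=h$ is its number of $*$s. Its bottom end is obtained by replacing all $*$s by $0$, its top end by replacing all $*$s by $1$. For a string $C$ over $\{0,1,*\}$ with at least two $*$s, $f(C)$ (resp. $\ell(C)$) is obtained by replacing the first two (resp. last two) $*$s by $0$ and $1$, respectively. Juxtaposition denotes concatenation. Two chains are connected at their bottom ends if their bottom ends differ in exactly one position. *)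

theory Defs
  imports Main
begin

datatype sym = Zero | One | Star

definition cnt :: "sym \<Rightarrow> sym list \<Rightarrow> nat" where
  "cnt a w = length (filter (\<lambda>x. x = a) w)"

definition inD :: "sym list \<Rightarrow> bool" where
  "inD w \<longleftrightarrow> set w \<subseteq> {Zero, One} \<and> cnt Zero w = cnt One w \<and>
     (\<forall>k \<le> length w. cnt One (take k w) \<le> cnt Zero (take k w))"

fun join_star :: "sym list list \<Rightarrow> sym list" where
  "join_star [] = []"
| "join_star [u] = u"
| "join_star (u # us) = u @ [Star] @ join_star us"

definition GK_chain :: "nat \<Rightarrow> sym list \<Rightarrow> bool" where
  "GK_chain m C \<longleftrightarrow> length C = m \<and>
     (\<exists>us. us \<noteq> [] \<and> (\<forall>u\<in>set us. inD u) \<and> C = join_star us)"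

definition nstars :: "sym list \<Rightarrow> nat" where
  "nstars C = cnt Star C"

fun rep_first :: "sym \<Rightarrow> sym list \<Rightarrow> sym list" where
  "rep_first a [] = []"
| "rep_first a (x # xs) = (if x = Star then a # xs else x # rep_first a xs)"

text \<open>f: replace the first two stars by 0 and 1; ell: the last two stars by 0 and 1.\<close>
definition fC :: "sym list \<Rightarrow> sym list" where
  "fC C = rep_first One (rep_first Zero C)"

definition ellC :: "sym list \<Rightarrow> sym list" where
  "ellC C = rev (rep_first Zero (rep_first One (rev C)))"

definition bottom :: "sym list \<Rightarrow> sym list" where
  "bottom C = map (\<lambda>x. if x = Star then Zero else x) C"

definition top :: "sym list \<Rightarrow> sym list" where
  "top C = map (\<lambda>x. if x = Star then One else x) C"

definition ndiff :: "sym list \<Rightarrow> sym list \<Rightarrow> nat" where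
  "ndiff x y = card {i. i < length x \<and> x ! i \<noteq> y ! i}"

definition adjacent :: "sym list \<Rightarrow> sym list \<Rightarrow> bool" where
  "adjacent x y \<longleftrightarrow> length x = length y \<and> ndiff x y = 1"

definition connected_bottom :: "sym list \<Rightarrow> sym list \<Rightarrow> bool" where
  "connected_bottom X Y \<longleftrightarrow> adjacent (bottom X) (bottom Y)"

end

theory Submission
  imports Defs
begin

lemma inD_nostar: "inD u \<Longrightarrow> Star \<notin> set u"
  unfolding inD_def by auto

lemma cnt_nostar: "Star \<notin> set u \<Longrightarrow> cnt Star u = 0"
  unfolding cnt_def by (auto simp add: filter_empty_conv)

lemma cnt_app: "cnt a (x @ y) = cnt a x + cnt a y"
  unfolding cnt_def by simp

lemma cnt_join: "(\<forall>u\<in>set us. Star \<notin> set u) \<Longrightarrow> us \<noteq> [] \<Longrightarrow>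
   cnt Star (join_star us) = length us - 1"
  by (induction us rule: join_star.induct) (simp_all add: cnt_app cnt_nostar, simp add: cnt_def)

lemma rep_app: "Star \<notin> set w \<Longrightarrow> rep_first a (w @ r) = w @ rep_first a r"
  by (induction w) auto

lemma ndiff_zip: "length x = length y \<Longrightarrow>
   ndiff x y = length (filter (\<lambda>p. fst p \<noteq> snd p) (zip x y))"
  unfolding ndiff_def by (simp add: length_filter_conv_card) (rule arg_cong[where f=card], auto simp: nth_zip)

lemma filt0: "length (filter (\<lambda>p. fst p \<noteq> snd p) (zip x x)) = 0"
  by (induction x) auto

lemma decomp:
  assumes "GK_chain m C" "nstars C = 1"
  shows "\<exists>u v. inD u \<and> inD v \<and> C = u @ [Star] @ v"
proof -
  obtain us where us: "us \<noteq> []" "\<forall>u\<in>set us. inD u" "C = join_star us"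
    using assms(1) unfolding GK_chain_def by blast
  have "\<forall>u\<in>set us. Star \<notin> set u" using us(2) inD_nostar by blast
  hence "length us - 1 = 1" using cnt_join[of us] us assms(2)
    unfolding nstars_def by simp
  hence "length us = 2" by simp
  then obtain u v where "us = [u, v]"
    by (cases us; cases "tl us") auto
  thus ?thesis using us by auto
qed

theorem lemma22:
  fixes n :: nat and C :: "sym list"
  assumes "n \<ge> 3" and "odd n" and "GK_chain (n - 2) C" and "nstars C = 1"
  defines "L \<equiv> ellC ([Star] @ C @ [Star])" and "F \<equiv> fC ([Star] @ C @ [Star])"
  shows "adjacent (bottom L) (top F)
    \<and> connected_bottom ([Star] @ L @ [Star]) (fC ([Star] @ F @ [Star]))
    \<and> (\<forall>u v. inD u \<longrightarrow> inD v \<longrightarrow> C = u @ [Star] @ v \<longrightarrow>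
          L = [Star] @ u @ [Zero] @ v @ [One]
        \<and> [Star] @ L @ [Star] = [Star, Star] @ u @ [Zero] @ v @ [One, Star]
        \<and> F = [Zero] @ u @ [One] @ v @ [Star]
        \<and> fC ([Star] @ F @ [Star]) = [Zero, Zero] @ u @ [One] @ v @ [One, Star])
    \<and> length L = length F \<and> ndiff L F = 3
    \<and> length ([Star] @ L @ [Star]) = length (fC ([Star] @ F @ [Star]))
    \<and> ndiff ([Star] @ L @ [Star]) (fC ([Star] @ F @ [Star])) = 3"
proof -
  have key: "L = [Star] @ u @ [Zero] @ v @ [One]
        \<and> F = [Zero] @ u @ [One] @ v @ [Star]
        \<and> fC ([Star] @ F @ [Star]) = [Zero, Zero] @ u @ [One] @ v @ [One, Star]"
    if "inD u" "inD v" "C = u @ [Star] @ v" for u v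
  proof -
    have nu: "Star \<notin> set u" and nv: "Star \<notin> set v" "Star \<notin> set (rev v)" "Star \<notin> set (rev u)"
      using that inD_nostar by auto
    show ?thesis using that nu nv
      by (simp add: L_def F_def ellC_def fC_def rep_app)
  qed
  obtain u v where uv: "inD u" "inD v" "C = u @ [Star] @ v"
    using decomp assms(3,4) by blast
  have nu: "Star \<notin> set u" "Star \<notin> set v" using uv inD_nostar by auto
  have bu: "bottom u = u" "top u = u" "bottom v = v" "top v = v"
    using nu by (auto simp: bottom_def top_def intro!: map_idI)
  note k = key[OF uv]
  have L: "L = [Star] @ u @ [Zero] @ v @ [One]" and F: "F = [Zero] @ u @ [One] @ v @ [Star]"
    and FF: "fC ([Star] @ F @ [Star]) = [Zero, Zero] @ u @ [One] @ v @ [One, Star]"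
    using k by auto
  have bL: "bottom L = [Zero] @ u @ [Zero] @ v @ [One]" using L bu by (simp add: bottom_def)
  have tF: "top F = [Zero] @ u @ [One] @ v @ [One]" using F bu by (simp add: top_def)
  have bL2: "bottom ([Star] @ L @ [Star]) = [Zero, Zero] @ u @ [Zero] @ v @ [One, Zero]"
    using L bu by (simp add: bottom_def)
  have bF2: "bottom (fC ([Star] @ F @ [Star])) = [Zero, Zero] @ u @ [One] @ v @ [One, Zero]"
    using FF bu by (simp add: bottom_def)
  have d1: "ndiff (bottom L) (top F) = 1"
    unfolding bL tF by (subst ndiff_zip) (auto simp: zip_append filt0)
  have d2: "ndiff (bottom ([Star] @ L @ [Star])) (bottom (fC ([Star] @ F @ [Star]))) = 1"
    unfolding bL2 bF2 by (subst ndiff_zip) (auto simp: zip_append filt0)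
  have d3: "ndiff L F = 3"
    unfolding L F by (subst ndiff_zip) (auto simp: zip_append filt0)
  have d4: "ndiff ([Star] @ L @ [Star]) (fC ([Star] @ F @ [Star])) = 3"
    unfolding L FF by (subst ndiff_zip) (auto simp: zip_append filt0)
  show ?thesis
    using key L F FF bL tF bL2 bF2 d1 d2 d3 d4
    by (simp add: adjacent_def connected_bottom_def)
qed

end
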